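(* Let $n>4$ be an integer. The tournament $U_n$ has exactly two sparse orderings. Specifically, if $n$ is even, these are $\Pi(U_n)=\langle v_1,P(2),P(4),\dots,P(n-2),v_n\rangle$ and $\Pi_{1,n}(U_n)=\langle P(1),P(3),\dots,P(n-1)\rangle$; if $n$ is odd, these are $\Pi_1(U_n)=\langle P(1),P(3),\dots,P(n-2),v_n\rangle$ and $\Pi_n(U_n)=\langle v_1,P(2),P(4),\dots,P(n-3),P(n-1)\rangle$, where for $k\in[n-1]$, $P(k)$ denotes the two consecutive vertices $\langle v_{k+1},v_k\rangle$ (written in this order) and concatenation of such blocks gives the ordering.
   Context: For $n\ge1$, $U_n$ is the tournament with vertex set $\{v_1,\dots,v_n\}$ and arc set $\{(v_{i+1},v_i): i\in[n-1]\}\cup\{(v_i,v_j): 1\le i<n,\ i+1<j\le n\}$. For an ordering $\sigma$ of the vertices, an arc $(x,y)$ is backward if $y$ comes before $x$ in $\sigma$. An ordering is sparse if every vertex is incident to at most one backward arc. *)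

theory Defs
  imports Main
begin

text \<open>Vertex v_i of U_n is represented by the natural number i, so the vertex set is {1..n}.
  A digraph is given by its arc relation A (A x y means (x,y) is an arc).\<close>

definition U_arc :: "nat \<Rightarrow> nat \<Rightarrow> nat \<Rightarrow> bool" where
  "U_arc n x y \<longleftrightarrow>
     (\<exists>i. 1 \<le> i \<and> i \<le> n - 1 \<and> x = i + 1 \<and> y = i) \<or>
     (\<exists>i j. 1 \<le> i \<and> i < n \<and> i + 1 < j \<and> j \<le> n \<and> x = i \<and> y = j)"

definition is_ordering :: "'a set \<Rightarrow> 'a list \<Rightarrow> bool" where
  "is_ordering V \<sigma> \<longleftrightarrow> distinct \<sigma> \<and> set \<sigma> = V"

definition comes_before :: "'a list \<Rightarrow> 'a \<Rightarrow> 'a \<Rightarrow> bool" where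
  "comes_before \<sigma> a b \<longleftrightarrow> (\<exists>i j. i < j \<and> j < length \<sigma> \<and> \<sigma> ! i = a \<and> \<sigma> ! j = b)"

definition backward_arcs :: "('a \<Rightarrow> 'a \<Rightarrow> bool) \<Rightarrow> 'a list \<Rightarrow> ('a \<times> 'a) set" where
  "backward_arcs A \<sigma> = {(x, y). A x y \<and> comes_before \<sigma> y x}"

definition sparse_ordering :: "'a set \<Rightarrow> ('a \<Rightarrow> 'a \<Rightarrow> bool) \<Rightarrow> 'a list \<Rightarrow> bool" where
  "sparse_ordering V A \<sigma> \<longleftrightarrow> is_ordering V \<sigma> \<and>
     (\<forall>v \<in> V. card {e \<in> backward_arcs A \<sigma>. fst e = v \<or> snd e = v} \<le> 1)"

definition P_block :: "nat \<Rightarrow> nat list" where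
  "P_block k = [k + 1, k]"

definition Pi_even :: "nat \<Rightarrow> nat list" where
  "Pi_even n = [1] @ concat (map (\<lambda>i. P_block (2 * i)) [1..<n div 2]) @ [n]"

definition Pi_1n_even :: "nat \<Rightarrow> nat list" where
  "Pi_1n_even n = concat (map (\<lambda>i. P_block (2 * i + 1)) [0..<n div 2])"

definition Pi_1_odd :: "nat \<Rightarrow> nat list" where
  "Pi_1_odd n = concat (map (\<lambda>i. P_block (2 * i + 1)) [0..<n div 2]) @ [n]"

definition Pi_n_odd :: "nat \<Rightarrow> nat list" where
  "Pi_n_odd n = [1] @ concat (map (\<lambda>i. P_block (2 * i)) [1..<n div 2 + 1])"

end

theory Submission
  imports Defs
begin


lemma U_arc_iff: "U_arc n x y \<longleftrightarrow> (x = y+1 \<and> 1 \<le> y \<and> y+1 \<le> n) \<or> (1 \<le> x \<and> x+2 \<le> y \<and> y \<le> n)"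
  unfolding U_arc_def by (auto; presburger)

definition fA :: "nat \<Rightarrow> nat \<Rightarrow> nat" where
  "fA n k = (if k = 0 then 1 else if odd k then min (k+2) n else k)"
definition fB :: "nat \<Rightarrow> nat \<Rightarrow> nat" where
  "fB n k = (if even k then min (k+2) n else k)"
definition qA :: "nat \<Rightarrow> nat \<Rightarrow> nat" where
  "qA n x = (if x = 1 then 0 else if odd x then x - 2 else if x = n then n - 1 else x)"
definition qB :: "nat \<Rightarrow> nat \<Rightarrow> nat" where
  "qB n x = (if even x then x - 2 else if x = n then n - 1 else x)"

lemma core:
  fixes p :: "nat \<Rightarrow> nat" and n :: nat
  assumes n5: "5 \<le> n" and inj: "inj_on p {1..n}"
  and M: "\<And>x y x' y'. U_arc n x y \<Longrightarrow> p y < p x \<Longrightarrow> U_arc n x' y' \<Longrightarrow> p y' < p x'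
     \<Longrightarrow> (x,y) \<noteq> (x',y') \<Longrightarrow> x=x' \<or> x=y' \<or> y=x' \<or> y=y' \<Longrightarrow> False"
  shows "(\<forall>k. k+1<n \<longrightarrow> p (fA n k) < p (fA n (k+1))) \<or> (\<forall>k. k+1<n \<longrightarrow> p (fB n k) < p (fB n (k+1)))"
proof -
  have ne: "p x \<noteq> p y" if "x \<in> {1..n}" "y \<in> {1..n}" "x \<noteq> y" for x y
    using inj that by (auto dest: inj_onD)
  have S: "U_arc n (y+1) y" if "1 \<le> y" "y+1 \<le> n" for y using that by (auto simp add: U_arc_iff)
  have S': "U_arc n y (y-1)" if "2 \<le> y" "y \<le> n" for y using that by (auto simp add: U_arc_iff)
  have L: "U_arc n x y" if "1 \<le> x" "x+2 \<le> y" "y \<le> n" for x y using that by (simp add: U_arc_iff)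
  have alt1: "\<not> (p i < p (i+1) \<and> p (i+1) < p (i+2))" if "1 \<le> i" "i+2 \<le> n" for i
    using M[OF S[of i] _ S[of "i+1"]] that by auto
  have alt2: "\<not> (p (i+1) < p i \<and> p (i+2) < p (i+1))" if "1 \<le> i" "i+2 \<le> n" for i
  proof
    assume h: "p (i+1) < p i \<and> p (i+2) < p (i+1)"
    then have bw: "p (i+2) < p i" by simp
    have Li: "U_arc n i (i+2)" using L that by simp
    show False
    proof (cases "i = 1")
      case True
      show False
      proof (cases "p 3 < p 4")
        case True
        then show False using M[OF Li bw S[of 3]] \<open>i = 1\<close> n5 by auto
      next
        case False
        then have "p 4 < p 3" using ne[of 3 4] n5 by auto
        moreover have "p 3 < p 1" using bw \<open>i=1\<close> by (simp add: eval_nat_numeral)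
        ultimately have "p 4 < p 1" by simp
        then show False using M[OF Li bw L[of 1 4]] \<open>i = 1\<close> n5 by auto
      qed
    next
      case False
      then obtain j where j: "i = j+1" "1 \<le> j" using \<open>1 \<le> i\<close> \<open>i \<noteq> 1\<close> by (cases i) auto
      have Sj: "U_arc n (j+1) j" using S[of j] j that by simp
      have Lj: "U_arc n j (j+3)" using L[of j "j+3"] j that by simp
      have bw': "p (j+3) < p (j+1)" using bw j by (simp add: eval_nat_numeral)
      have Li': "U_arc n (j+1) (j+3)" using Li j by (simp add: eval_nat_numeral)
      show False
      proof (cases "p j < p (j+1)")
        case True
        then show False using M[OF Li' bw' Sj] by auto
      next
        case c: False
        then have "p (j+1) < p j" using ne[of j "j+1"] that j by auto
        then have "p (j+3) < p j" using bw' by simp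
        then show False using M[OF Li' bw' Lj] by auto
      qed
    qed
  qed
  have pat: "\<forall>i. 1 \<le> i \<longrightarrow> i+1 \<le> n \<longrightarrow> (p i < p (i+1) \<longleftrightarrow> (p 1 < p 2 \<longleftrightarrow> odd i))"
  proof (rule allI)
    fix i show "1 \<le> i \<longrightarrow> i+1 \<le> n \<longrightarrow> (p i < p (i+1) \<longleftrightarrow> (p 1 < p 2 \<longleftrightarrow> odd i))"
    proof (induction i)
      case 0 then show ?case by simp
    next
      case (Suc i)
      show ?case
      proof (cases "i = 0")
        case True then show ?thesis by (simp add: eval_nat_numeral)
      next
        case False
        show ?thesis
        proof (intro impI)
          assume "1 \<le> Suc i" "Suc i + 1 \<le> n"
          then have IH: "p i < p (i+1) \<longleftrightarrow> (p 1 < p 2 \<longleftrightarrow> odd i)" using Suc.IH False by auto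
          have a1: "\<not> (p i < p (i+1) \<and> p (i+1) < p (i+2))" using alt1[of i] False \<open>Suc i + 1 \<le> n\<close> by auto
          have a2: "\<not> (p (i+1) < p i \<and> p (i+2) < p (i+1))" using alt2[of i] False \<open>Suc i + 1 \<le> n\<close> by auto
          have n1: "p i \<noteq> p (i+1)" using ne[of i "i+1"] False \<open>Suc i + 1 \<le> n\<close> by auto
          have n2: "p (i+1) \<noteq> p (i+2)" using ne[of "i+1" "i+2"] False \<open>Suc i + 1 \<le> n\<close> by auto
          show "p (Suc i) < p (Suc i + 1) \<longleftrightarrow> (p 1 < p 2 \<longleftrightarrow> odd (Suc i))"
            using IH a1 a2 n1 n2 by auto
        qed
      qed
    qed
  qed
  show ?thesis
  proof (cases "p 1 < p 2")
    case A: True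
    have "p (fA n k) < p (fA n (k+1))" if k: "k+1 < n" for k
    proof -
      consider "k = 0" | "odd k" | "even k" "k \<ge> 2" by (cases "k = 0"; cases "k=1"; auto)
      then show ?thesis
      proof cases
        case 1
        have "\<not> p 3 < p 1" using M[OF L[of 1 3] _ S[of 1]] A n5 by (auto simp: eval_nat_numeral)
        then have "p 1 < p 3" using ne[of 1 3] n5 by (auto simp: eval_nat_numeral)
        then show ?thesis using 1 using n5 by (simp add: fA_def min_def eval_nat_numeral)
      next
        case 2
        have "\<not> p (k+1) < p (k+2)" using pat[rule_format, of "k+1"] A 2 k by auto
        then have "p (k+2) < p (k+1)" using ne[of "k+1" "k+2"] k by auto
        then show ?thesis using 2 k by (auto simp add: fA_def min_def intro!: Nat.gr0I)
      next
        case 3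
        define m where "m = min (Suc (Suc (Suc k))) n"
        have mk: "m \<noteq> k - 1" "k+2 \<le> m" "m \<le> n" using k m_def by auto
        have bk: "p (k-1) < p k" using pat[rule_format, of "k-1"] A 3 k by auto
        have "\<not> p m < p k" using M[OF L[of k m] _ S'[of k]] bk 3 k mk by auto
        then have "p k < p m" using ne[of k m] k 3 mk by auto
        moreover have "fA n (k+1) = m" using 3 m_def by (simp add: fA_def)
        moreover have "fA n k = k" using 3 by (auto simp: fA_def)
        ultimately show ?thesis by simp
      qed
    qed
    then show ?thesis by blast
  next
    case B: False
    have "p (fB n k) < p (fB n (k+1))" if k: "k+1 < n" for k
    proof -
      have kc: "even k \<or> (odd k \<and> 3 \<le> k) \<or> k = 1" by presburger
      then consider "even k" | "odd k" "k \<ge> 3" | "k = 1" by blast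
      then show ?thesis
      proof cases
        case 1
        have "\<not> p (k+1) < p (k+2)" using pat[rule_format, of "k+1"] B 1 k by auto
        then have "p (k+2) < p (k+1)" using ne[of "k+1" "k+2"] k by auto
        then show ?thesis using 1 k by (simp add: fB_def min_def)
      next
        case 2
        define m where "m = min (Suc (Suc (Suc k))) n"
        have mk: "m \<noteq> k - 1" "k+2 \<le> m" "m \<le> n" using k m_def by auto
        have bk: "p (k-1) < p k" using pat[rule_format, of "k-1"] B 2 k by auto
        have "\<not> p m < p k" using M[OF L[of k m] _ S'[of k]] bk 2 k mk by auto
        then have "p k < p m" using ne[of k m] k 2 mk by auto
        moreover have "fB n (k+1) = m" using 2 m_def by (simp add: fB_def)
        moreover have "fB n k = k" using 2 by (auto simp: fB_def)
        ultimately show ?thesis by simp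
      next
        case 3
        have b4: "p 4 < p 5" using pat[rule_format, of 4] B n5 by auto
        have "\<not> p 4 < p 1" using M[OF L[of 1 4] _ S[of 4]] b4 n5 by auto
        then have "p 1 < p 4" using ne[of 1 4] n5 by auto
        then show ?thesis using 3 n5 by (simp add: fB_def eval_nat_numeral)
      qed
    qed
    then show ?thesis by blast
  qed
qed




lemma cb_pos:
  assumes d: "distinct \<sigma>" and p: "\<forall>x\<in>set \<sigma>. p x < length \<sigma> \<and> \<sigma> ! (p x) = x"
  shows "comes_before \<sigma> a b \<longleftrightarrow> a \<in> set \<sigma> \<and> b \<in> set \<sigma> \<and> p a < p b"
proof
  assume "comes_before \<sigma> a b"
  then obtain i j where ij: "i < j" "j < length \<sigma>" "\<sigma> ! i = a" "\<sigma> ! j = b"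
    unfolding comes_before_def by blast
  then have a: "a \<in> set \<sigma>" and b: "b \<in> set \<sigma>" by auto
  have "p a = i" using p a ij d by (metis nth_eq_iff_index_eq order.strict_trans)
  moreover have "p b = j" using p b ij d by (metis nth_eq_iff_index_eq)
  ultimately show "a \<in> set \<sigma> \<and> b \<in> set \<sigma> \<and> p a < p b" using a b ij by simp
next
  assume "a \<in> set \<sigma> \<and> b \<in> set \<sigma> \<and> p a < p b"
  then show "comes_before \<sigma> a b" unfolding comes_before_def using p by blast
qed

lemma chain_id:
  fixes g :: "nat \<Rightarrow> nat"
  assumes inc: "\<forall>k. k+1<n \<longrightarrow> g k < g (k+1)" and bd: "\<forall>k<n. g k < n"
  shows "\<forall>k<n. g k = k"
proof (intro allI impI)
  fix k assume k: "k < n"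
  have lo: "k < n \<Longrightarrow> k \<le> g k" for k
  proof (induction k)
    case 0 then show ?case by simp
  next
    case (Suc k) then show ?case using inc[rule_format, of k] by simp
  qed
  have hi: "\<forall>k. k + d = n - 1 \<longrightarrow> g k + d \<le> g (n-1)" for d
  proof (induction d)
    case 0 then show ?case by simp
  next
    case (Suc d)
    show ?case
    proof (intro allI impI)
      fix k assume "k + Suc d = n - 1"
      then have "(k+1) + d = n - 1" "k + 1 < n" by auto
      then show "g k + Suc d \<le> g (n-1)" using Suc.IH inc by fastforce
    qed
  qed
  have "g k + (n - 1 - k) \<le> g (n-1)" using hi[of "n-1-k"] k by simp
  moreover have "g (n-1) < n" using bd k by simp
  ultimately show "g k = k" using lo[OF k] k by linarith
qed

lemma U_arc_range: "U_arc n x y \<Longrightarrow> x \<in> {1..n} \<and> y \<in> {1..n}"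
  by (auto simp: U_arc_iff)

lemma fA_range: "5 \<le> n \<Longrightarrow> k < n \<Longrightarrow> fA n k \<in> {1..n}"
  by (auto simp: fA_def)
lemma fB_range: "5 \<le> n \<Longrightarrow> k < n \<Longrightarrow> fB n k \<in> {1..n}"
  by (auto simp: fB_def Suc_le_eq odd_pos)




lemma par: obtains m where "x = 2*m" "even x" | m where "x = 2*m+1" "odd x"
  by (metis evenE oddE)

lemma fA_qA: "5 \<le> n \<Longrightarrow> x \<in> {1..n} \<Longrightarrow> qA n x < n \<and> fA n (qA n x) = x"
proof -
  assume n: "5 \<le> n" "x \<in> {1..n}"
  show ?thesis
  proof (cases "x = 1")
    case True then show ?thesis using n by (simp add: qA_def fA_def)
  next
    case False
    from par[of x] show ?thesis
    proof cases
      case (1 m)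
      then show ?thesis using n False by (auto simp: qA_def fA_def)
    next
      case (2 m)
      then obtain j where j: "m = Suc j" using False by (cases m) auto
      then have "x - 2 = 2*j+1" using 2 by simp
      then show ?thesis using n False 2 j by (auto simp: qA_def fA_def)
    qed
  qed
qed

lemma fB_qB: "5 \<le> n \<Longrightarrow> x \<in> {1..n} \<Longrightarrow> qB n x < n \<and> fB n (qB n x) = x"
proof -
  assume n: "5 \<le> n" "x \<in> {1..n}"
  from par[of x] show ?thesis
  proof cases
    case (1 m)
    then obtain j where j: "m = Suc j" using n by (cases m) auto
    then have "x - 2 = 2*j" using 1 by simp
    then show ?thesis using n 1 j by (auto simp: qB_def fB_def)
  next
    case (2 m)
    then show ?thesis using n by (auto simp: qB_def fB_def)
  qed
qed

lemma qA_alt: "qA n x = (if x = 1 then 0 else if odd x then x - 2 else if x = n then n - 1 else x)"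
  by (simp add: qA_def)

lemma bwA: assumes "5 \<le> n" "U_arc n x y" "qA n y < qA n x" shows "x = y + 1 \<and> odd y"
proof -
  from assms(2) consider "x = y+1" "1 \<le> y" "y+1 \<le> n" | "1 \<le> x" "x+2 \<le> y" "y \<le> n"
    unfolding U_arc_iff by blast
  then show ?thesis
  proof cases
    case 1
    from par[of y] show ?thesis
    proof cases
      case (1 m) then show ?thesis using assms \<open>x = y+1\<close> \<open>1 \<le> y\<close> \<open>y+1 \<le> n\<close> by (auto simp: qA_def)
    qed (use 1 in simp)
  next
    case 2
    from par[of x] par[of y] show ?thesis
      by cases (use assms 2 in \<open>auto simp: qA_def split: if_splits\<close>)
  qed
qed

lemma bwB: assumes "5 \<le> n" "U_arc n x y" "qB n y < qB n x" shows "x = y + 1 \<and> even y"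
proof -
  from assms(2) consider "x = y+1" "1 \<le> y" "y+1 \<le> n" | "1 \<le> x" "x+2 \<le> y" "y \<le> n"
    unfolding U_arc_iff by blast
  then show ?thesis
  proof cases
    case 1
    from par[of y] show ?thesis
    proof cases
      case (2 m) then show ?thesis using assms \<open>x = y+1\<close> \<open>1 \<le> y\<close> \<open>y+1 \<le> n\<close> by (auto simp: qB_def)
    qed (use 1 in simp)
  next
    case 2
    from par[of x] par[of y] show ?thesis
      by cases (use assms 2 in \<open>auto simp: qB_def split: if_splits\<close>)
  qed
qed




lemma cm: "length (concat (map (\<lambda>i. [g i, h i]) [0..<m])) = 2*m \<and>
   (\<forall>k<2*m. concat (map (\<lambda>i. [g i, h i]) [0..<m]) ! k = (if even k then g (k div 2) else h (k div 2)))"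
proof (induction m)
  case 0 then show ?case by simp
next
  case (Suc m)
  show ?case
  proof
    show "length (concat (map (\<lambda>i. [g i, h i]) [0..<Suc m])) = 2 * Suc m" using Suc by simp
    show "\<forall>k<2 * Suc m. concat (map (\<lambda>i. [g i, h i]) [0..<Suc m]) ! k = (if even k then g (k div 2) else h (k div 2))"
    proof (intro allI impI)
      fix k assume k: "k < 2 * Suc m"
      have e: "concat (map (\<lambda>i. [g i, h i]) [0..<Suc m]) = concat (map (\<lambda>i. [g i, h i]) [0..<m]) @ [g m, h m]" by simp
      show "concat (map (\<lambda>i. [g i, h i]) [0..<Suc m]) ! k = (if even k then g (k div 2) else h (k div 2))"
      proof (cases "k < 2*m")
        case True then show ?thesis unfolding e using Suc.IH by (simp add: nth_append)
      next
        case False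
        then have "k = 2*m \<or> k = 2*m+1" using k by auto
        then show ?thesis unfolding e using Suc.IH by (auto simp: nth_append)
      qed
    qed
  qed
qed

lemma len_cm [simp]: "length (concat (map (\<lambda>i. [g i, h i]) xs)) = 2 * length xs"
  by (induction xs) auto

lemma dv2: "even (k::nat) \<Longrightarrow> 2*(k div 2) = k" "odd k \<Longrightarrow> 2*(k div 2)+1 = (k::nat)"
  by presburger+

lemma cm1: "[1..<Suc m] = map Suc [0..<m]" by (simp add: map_Suc_upt)

lemma Pi_1n_even_eq: assumes "5 \<le> n" "even n" shows "Pi_1n_even n = map (fB n) [0..<n]"
proof -
  have e: "Pi_1n_even n = concat (map (\<lambda>i. [2*i+2, 2*i+1]) [0..<n div 2])"
    by (simp add: Pi_1n_even_def P_block_def)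
  have n2: "2 * (n div 2) = n" using assms by simp
  show ?thesis unfolding e
  proof (rule nth_equalityI)
    show "length (concat (map (\<lambda>i. [2*i+2, 2*i+1]) [0..<n div 2])) = length (map (fB n) [0..<n])"
      using cm n2 by simp
    fix k assume "k < length (concat (map (\<lambda>i. [2*i+2, 2*i+1]) [0..<n div 2]))"
    then have k: "k < n" using cm n2 by simp
    have "concat (map (\<lambda>i. [2*i+2, 2*i+1]) [0..<n div 2]) ! k = (if even k then 2*(k div 2)+2 else 2*(k div 2)+1)"
      using cm[of "\<lambda>i. 2*i+2" "\<lambda>i. 2*i+1" "n div 2"] k n2 by simp
    moreover have "k + 2 \<le> n \<or> odd k" using k assms by presburger
    ultimately show "concat (map (\<lambda>i. [2*i+2, 2*i+1]) [0..<n div 2]) ! k = map (fB n) [0..<n] ! k"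
      using k by (auto simp: fB_def dv2 split: if_splits)
  qed
qed

lemma Pi_1_odd_eq: assumes "5 \<le> n" "odd n" shows "Pi_1_odd n = map (fB n) [0..<n]"
proof -
  have e: "Pi_1_odd n = concat (map (\<lambda>i. [2*i+2, 2*i+1]) [0..<n div 2]) @ [n]"
    by (simp add: Pi_1_odd_def P_block_def)
  have n2: "2 * (n div 2) = n - 1" using assms by presburger
  show ?thesis unfolding e
  proof (rule nth_equalityI)
    show "length (concat (map (\<lambda>i. [2*i+2, 2*i+1]) [0..<n div 2]) @ [n]) = length (map (fB n) [0..<n])"
      using cm n2 assms by simp
    fix k assume "k < length (concat (map (\<lambda>i. [2*i+2, 2*i+1]) [0..<n div 2]) @ [n])"
    then have k: "k < n" using cm n2 assms by simp
    show "(concat (map (\<lambda>i. [2*i+2, 2*i+1]) [0..<n div 2]) @ [n]) ! k = map (fB n) [0..<n] ! k"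
    proof (cases "k < n - 1")
      case True
      have "concat (map (\<lambda>i. [2*i+2, 2*i+1]) [0..<n div 2]) ! k = (if even k then 2*(k div 2)+2 else 2*(k div 2)+1)"
        using cm[of "\<lambda>i. 2*i+2" "\<lambda>i. 2*i+1" "n div 2"] True n2 by simp
      moreover have "k + 2 \<le> n \<or> odd k" using True assms by presburger
      ultimately show ?thesis using True k cm[of "\<lambda>i. 2*i+2" "\<lambda>i. 2*i+1" "n div 2"] n2
        by (auto simp: fB_def nth_append dv2 split: if_splits)
    next
      case False
      then have "k = n - 1" using k by simp
      moreover have "even (n - 1)" using assms by simp
      ultimately show ?thesis using k cm[of "\<lambda>i. 2*i+2" "\<lambda>i. 2*i+1" "n div 2"] n2 assms
        by (auto simp: fB_def nth_append)
    qed
  qed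
qed

lemma Pi_even_eq: assumes "5 \<le> n" "even n" shows "Pi_even n = map (fA n) [0..<n]"
proof -
  define X where "X = concat (map (\<lambda>i. [2*i+3, 2*i+2]) [0..<n div 2 - 1])"
  have m1: "Suc (n div 2 - 1) = n div 2" using assms by simp
  have u: "[1..<n div 2] = map Suc [0..<n div 2 - 1]" using m1 map_Suc_upt[of 0 "n div 2 - 1"] by simp
  have e: "Pi_even n = [1] @ X @ [n]"
    unfolding Pi_even_def X_def u by (simp add: P_block_def o_def eval_nat_numeral)
  have lX: "length X = n - 2" unfolding X_def using assms by simp presburger
  show ?thesis unfolding e
  proof (rule nth_equalityI)
    show "length ([1] @ X @ [n]) = length (map (fA n) [0..<n])" using lX assms by simp
    fix k assume "k < length ([1] @ X @ [n])"
    then have k: "k < n" using lX assms by simp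
    show "([1] @ X @ [n]) ! k = map (fA n) [0..<n] ! k"
    proof (cases k)
      case 0 then show ?thesis using k by (simp add: fA_def)
    next
      case (Suc j)
      show ?thesis
      proof (cases "j < n - 2")
        case True
        have "X ! j = (if even j then 2*(j div 2)+3 else 2*(j div 2)+2)"
          using cm[of "\<lambda>i. 2*i+3" "\<lambda>i. 2*i+2" "n div 2 - 1"] True assms unfolding X_def by auto
        moreover have "j + 3 \<le> n \<or> odd j" using True assms by presburger
        ultimately show ?thesis using True k lX Suc by (auto simp: fA_def nth_append dv2 split: if_splits)
      next
        case False
        then have "j = n - 2" using k Suc by simp
        then show ?thesis using k lX Suc assms by (auto simp: fA_def nth_append)
      qed
    qed
  qed
qed

lemma Pi_n_odd_eq: assumes "5 \<le> n" "odd n" shows "Pi_n_odd n = map (fA n) [0..<n]"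
proof -
  define X where "X = concat (map (\<lambda>i. [2*i+3, 2*i+2]) [0..<n div 2])"
  have u2: "[1..<n div 2 + 1] = map Suc [0..<n div 2]" using map_Suc_upt[of 0 "n div 2"] by simp
  have e: "Pi_n_odd n = [1] @ X"
    unfolding Pi_n_odd_def X_def u2 by (simp add: P_block_def o_def eval_nat_numeral)
  have lX: "length X = n - 1" unfolding X_def using assms by simp
  show ?thesis unfolding e
  proof (rule nth_equalityI)
    show "length ([1] @ X) = length (map (fA n) [0..<n])" using lX assms by simp
    fix k assume "k < length ([1] @ X)"
    then have k: "k < n" using lX assms by simp
    show "([1] @ X) ! k = map (fA n) [0..<n] ! k"
    proof (cases k)
      case 0 then show ?thesis using k by (simp add: fA_def)
    next
      case (Suc j)
      have True: "j < n - 1" using k Suc by simp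
      have "X ! j = (if even j then 2*(j div 2)+3 else 2*(j div 2)+2)"
        using cm[of "\<lambda>i. 2*i+3" "\<lambda>i. 2*i+2" "n div 2"] True assms unfolding X_def by auto
      moreover have "j + 3 \<le> n \<or> odd j" using True assms by presburger
      ultimately show ?thesis using True k lX Suc by (auto simp: fA_def nth_append dv2 split: if_splits)
    qed
  qed
qed




lemma bw_fin: "finite (backward_arcs (U_arc n) \<sigma>)"
  by (rule finite_subset[of _ "{1..n}\<times>{1..n}"]) (auto simp: backward_arcs_def dest: U_arc_range)

lemma sparse_char: assumes n5: "5 \<le> n" and sp: "sparse_ordering {1..n} (U_arc n) \<sigma>"
  shows "\<sigma> = map (fA n) [0..<n] \<or> \<sigma> = map (fB n) [0..<n]"
proof -
  from sp have d: "distinct \<sigma>" and s: "set \<sigma> = {1..n}"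
    and c: "\<forall>v\<in>{1..n}. card {e \<in> backward_arcs (U_arc n) \<sigma>. fst e = v \<or> snd e = v} \<le> 1"
    unfolding sparse_ordering_def is_ordering_def by auto
  have len: "length \<sigma> = n" using distinct_card[OF d] s by simp
  have "\<forall>x\<in>set \<sigma>. \<exists>i. i < length \<sigma> \<and> \<sigma> ! i = x" by (auto simp: in_set_conv_nth)
  from bchoice[OF this] obtain p where p: "\<forall>x\<in>set \<sigma>. p x < length \<sigma> \<and> \<sigma> ! (p x) = x" by blast
  have cb: "comes_before \<sigma> x y \<longleftrightarrow> p x < p y" if "x \<in> {1..n}" "y \<in> {1..n}" for x y
    using cb_pos[OF d p] s that by auto
  have inj: "inj_on p {1..n}"
  proof (rule inj_onI)
    fix x y assume xy: "x \<in> {1..n}" "y \<in> {1..n}" "p x = p y"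
    have "\<sigma> ! (p x) = x" using p s xy(1) by blast
    moreover have "\<sigma> ! (p y) = y" using p s xy(2) by blast
    ultimately show "x = y" using xy(3) by metis
  qed
  have M: False if a1: "U_arc n x y" "p y < p x" and a2: "U_arc n x' y'" "p y' < p x'"
     and ne: "(x,y) \<noteq> (x',y')" and sh: "x=x' \<or> x=y' \<or> y=x' \<or> y=y'" for x y x' y'
  proof -
    have r1: "x \<in> {1..n}" "y \<in> {1..n}" using U_arc_range[OF a1(1)] by auto
    have r2: "x' \<in> {1..n}" "y' \<in> {1..n}" using U_arc_range[OF a2(1)] by auto
    have "comes_before \<sigma> y x" using cb[OF r1(2) r1(1)] a1(2) by blast
    then have e1: "(x,y) \<in> backward_arcs (U_arc n) \<sigma>" unfolding backward_arcs_def using a1(1) by blast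
    have "comes_before \<sigma> y' x'" using cb[OF r2(2) r2(1)] a2(2) by blast
    then have e2: "(x',y') \<in> backward_arcs (U_arc n) \<sigma>" unfolding backward_arcs_def using a2(1) by blast
    obtain v where v: "v \<in> {1..n}" "x = v \<or> y = v" "x' = v \<or> y' = v"
      using sh r1 r2 by blast
    let ?S = "{e \<in> backward_arcs (U_arc n) \<sigma>. fst e = v \<or> snd e = v}"
    have "finite ?S" using bw_fin by simp
    moreover have "{(x,y),(x',y')} \<subseteq> ?S" using e1 e2 v by auto
    ultimately have "card {(x,y),(x',y')} \<le> card ?S" by (rule card_mono)
    moreover have "card {(x,y),(x',y')} = 2" using ne by simp
    moreover have "card ?S \<le> 1" using c v(1) by blast
    ultimately show False by simp
  qed
  have pr: "\<forall>x\<in>{1..n}. p x < n" using p s len by auto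
  have fin: "\<sigma> = map f [0..<n]" if ch: "\<forall>k. k+1<n \<longrightarrow> p (f k) < p (f (k+1))"
    and fr: "\<And>k. k < n \<Longrightarrow> f k \<in> {1..n}" for f
  proof -
    have "\<forall>k<n. (p \<circ> f) k = k"
      by (rule chain_id) (use ch fr pr in auto)
    have "\<forall>k<n. \<sigma> ! k = f k"
    proof (intro allI impI)
      fix k assume k: "k < n"
      have "p (f k) = k" using \<open>\<forall>k<n. (p \<circ> f) k = k\<close> k by simp
      moreover have "\<sigma> ! (p (f k)) = f k" using p s fr[OF k] by auto
      ultimately show "\<sigma> ! k = f k" by simp
    qed
    then show ?thesis using len by (intro nth_equalityI) auto
  qed
  from core[OF n5 inj M] show ?thesis
  proof
    assume "\<forall>k. k+1<n \<longrightarrow> p (fA n k) < p (fA n (k+1))"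
    then show ?thesis using fin[of "fA n"] fA_range[OF n5] by blast
  next
    assume "\<forall>k. k+1<n \<longrightarrow> p (fB n k) < p (fB n (k+1))"
    then show ?thesis using fin[of "fB n"] fB_range[OF n5] by blast
  qed
qed

lemma cand_sparse:
  assumes n5: "5 \<le> n"
  and fr: "\<And>k. k < n \<Longrightarrow> f k \<in> {1..n}"
  and fq: "\<And>x. x \<in> {1..n} \<Longrightarrow> q x < n \<and> f (q x) = x"
  and bw: "\<And>x y. U_arc n x y \<Longrightarrow> q y < q x \<Longrightarrow> x = y + 1 \<and> P y"
  and par: "\<And>y y'. P y \<Longrightarrow> P y' \<Longrightarrow> y' = y + 1 \<Longrightarrow> False"
  shows "sparse_ordering {1..n} (U_arc n) (map f [0..<n])"
proof -
  let ?t = "map f [0..<n]"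
  have s: "set ?t = {1..n}"
  proof
    show "set ?t \<subseteq> {1..n}" using fr by auto
    show "{1..n} \<subseteq> set ?t"
    proof
      fix x assume "x \<in> {1..n}"
      then have "q x < n" "f (q x) = x" using fq by auto
      then have "?t ! (q x) = x" by simp
      moreover have "q x < length ?t" using \<open>q x < n\<close> by simp
      ultimately show "x \<in> set ?t" by (metis nth_mem)
    qed
  qed
  have d: "distinct ?t" by (rule card_distinct) (use s in simp)
  have p: "\<forall>x\<in>set ?t. q x < length ?t \<and> ?t ! (q x) = x" using s fq by auto
  have B: "backward_arcs (U_arc n) ?t \<subseteq> {(x,y). x = y + 1 \<and> P y}"
  proof
    fix e assume "e \<in> backward_arcs (U_arc n) ?t"
    then obtain x y where e: "e = (x,y)" "U_arc n x y" "comes_before ?t y x"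
      unfolding backward_arcs_def by blast
    have "q y < q x" using e(3) cb_pos[OF d p] by blast
    then have "x = y + 1 \<and> P y" using bw e(2) by blast
    then show "e \<in> {(x,y). x = y + 1 \<and> P y}" using e(1) by simp
  qed
  show ?thesis unfolding sparse_ordering_def is_ordering_def
  proof (intro conjI d s ballI)
    fix v assume "v \<in> {1..n}"
    let ?S = "{e \<in> backward_arcs (U_arc n) ?t. fst e = v \<or> snd e = v}"
    have "finite ?S" using bw_fin by simp
    moreover have "\<forall>a\<in>?S. \<forall>b\<in>?S. a = b"
    proof (intro ballI)
      fix a b assume a: "a \<in> ?S" and b: "b \<in> ?S"
      obtain x y where [simp]: "a = (x,y)" by (cases a)
      obtain x' y' where [simp]: "b = (x',y')" by (cases b)
      have h: "x = y+1" "P y" "x' = y'+1" "P y'" using a b B by auto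
      have va: "x = v \<or> y = v" and vb: "x' = v \<or> y' = v" using a b by auto
      show "a = b"
      proof (cases "y = y'")
        case True then show ?thesis using h by simp
      next
        case False
        then have "y' = y + 1 \<or> y = y' + 1" using h va vb by auto
        then show ?thesis using par h by blast
      qed
    qed
    ultimately have "card ?S \<le> Suc 0" using card_le_Suc0_iff_eq[of ?S] by blast
    then show "card ?S \<le> 1" by (simp only: One_nat_def)
  qed
qed

lemma A_sparse: assumes "5 \<le> n" shows "sparse_ordering {1..n} (U_arc n) (map (fA n) [0..<n])"
  by (rule cand_sparse[where q = "qA n" and P = odd, OF assms fA_range[OF assms] fA_qA[OF assms] bwA[OF assms]]) auto
lemma B_sparse: assumes "5 \<le> n" shows "sparse_ordering {1..n} (U_arc n) (map (fB n) [0..<n])"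
  by (rule cand_sparse[where q = "qB n" and P = even, OF assms fB_range[OF assms] fB_qB[OF assms] bwB[OF assms]]) auto

lemma AB_ne: "5 \<le> n \<Longrightarrow> map (fA n) [0..<n] \<noteq> map (fB n) [0..<n]"
proof
  assume "5 \<le> n" "map (fA n) [0..<n] = map (fB n) [0..<n]"
  then have "map (fA n) [0..<n] ! 0 = map (fB n) [0..<n] ! 0" by simp
  then show False using \<open>5 \<le> n\<close> by (simp add: fA_def fB_def)
qed

theorem mainTheorem5:
  fixes n :: nat
  assumes "n > 4"
  shows "(even n \<longrightarrow> {\<sigma>. sparse_ordering {1..n} (U_arc n) \<sigma>} = {Pi_even n, Pi_1n_even n}
                        \<and> Pi_even n \<noteq> Pi_1n_even n) \<and>
         (odd n \<longrightarrow> {\<sigma>. sparse_ordering {1..n} (U_arc n) \<sigma>} = {Pi_1_odd n, Pi_n_odd n}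
                        \<and> Pi_1_odd n \<noteq> Pi_n_odd n)"
proof -
  have n5: "5 \<le> n" using assms by simp
  have S: "{\<sigma>. sparse_ordering {1..n} (U_arc n) \<sigma>} = {map (fA n) [0..<n], map (fB n) [0..<n]}"
    using sparse_char[OF n5] A_sparse[OF n5] B_sparse[OF n5] by auto
  show ?thesis
  proof (intro conjI impI)
    assume e: "even n"
    show "{\<sigma>. sparse_ordering {1..n} (U_arc n) \<sigma>} = {Pi_even n, Pi_1n_even n}"
      unfolding S Pi_even_eq[OF n5 e] Pi_1n_even_eq[OF n5 e] ..
    show "Pi_even n \<noteq> Pi_1n_even n"
      unfolding Pi_even_eq[OF n5 e] Pi_1n_even_eq[OF n5 e] by (rule AB_ne[OF n5])
  next
    assume e: "odd n"
    show "{\<sigma>. sparse_ordering {1..n} (U_arc n) \<sigma>} = {Pi_1_odd n, Pi_n_odd n}"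
      unfolding S Pi_1_odd_eq[OF n5 e] Pi_n_odd_eq[OF n5 e] by blast
    show "Pi_1_odd n \<noteq> Pi_n_odd n"
      unfolding Pi_1_odd_eq[OF n5 e] Pi_n_odd_eq[OF n5 e] using AB_ne[OF n5] by metis
  qed
qed


end
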